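(* Let $n\geq 0$ be an integer, $r,s\in\mathbf{N}$, $k\in\mathbf{Z}$ and $\lambda\in\mathbf{C}$ with $\lambda\neq 1$. Then \[\tilde{A}_{n}^{(r,k)}(x)=\sum_{m=0}^{n}\left\{\sum_{l=0}^{n-m}\sum_{a=0}^{l}\frac{\binom{n}{l}\binom{s}{a}\binom{l}{a}a!}{(1-\lambda)^{a}}S_{1}(n-l,m)\tilde{A}_{l-a}^{(r,k)}\right\}H_{m}^{(s)}(x\mid\lambda).\]
   Context: For $k\in\mathbf{Z}$, $Lif_{k}(x)=\sum_{m=0}^{\infty}\frac{x^{m}}{m!(m+1)^{k}}$. For integers $r\geq 0$, $k\in\mathbf{Z}$, the polynomials $\tilde{A}_{n}^{(r,k)}(x)$ are defined by \[\left(\frac{t}{(1+t)\log(1+t)}\right)^{r}Lif_{k}\left(-\log(1+t)\right)(1+t)^{x}=\sum_{n=0}^{\infty}\tilde{A}_{n}^{(r,k)}(x)\frac{t^{n}}{n!},\] and $\tilde{A}_{n}^{(r,k)}=\tilde{A}_{n}^{(r,k)}(0)$. For $\lambda\neq 1$, the Frobenius–Euler polynomials of order $s$ are defined by $\left(\frac{1-\lambda}{e^{t}-\lambda}\right)^{s}e^{xt}=\sum_{n=0}^{\infty}H_{n}^{(s)}(x\mid\lambda)\frac{t^{n}}{n!}$. $S_{1}(n,m)$ denotes the signed Stirling numbers of the first kind, defined by $x(x-1)\cdots(x-n+1)=\sum_{m=0}^{n}S_{1}(n,m)x^{m}$. *)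

theory Defs
  imports "HOL-Computational_Algebra.Computational_Algebra"
begin

definition Lif_fps :: "int \<Rightarrow> complex fps" where
  "Lif_fps k = Abs_fps (\<lambda>m. 1 / (of_nat (fact m) * (of_nat (m + 1)) powi k))"

abbreviation log1p_fps :: "complex fps" where
  "log1p_fps \<equiv> fps_ln 1"

(* generating function of tilde A_n^{(r,k)}(x):
   (t/((1+t) log(1+t)))^r * Lif_k(-log(1+t)) * (1+t)^x;
   t/log(1+t) = inverse (log(1+t)/t), and log(1+t)/t = fps_shift 1 (log(1+t)) *)
definition Atilde_gf :: "nat \<Rightarrow> int \<Rightarrow> complex \<Rightarrow> complex fps" where
  "Atilde_gf r k x =
     (inverse ((1 + fps_X) * fps_shift 1 log1p_fps)) ^ r
     * (Lif_fps k oo (- log1p_fps))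
     * fps_binomial x"

definition Atilde :: "nat \<Rightarrow> nat \<Rightarrow> int \<Rightarrow> complex \<Rightarrow> complex" where
  "Atilde n r k x = of_nat (fact n) * fps_nth (Atilde_gf r k x) n"

definition FE_gf :: "nat \<Rightarrow> complex \<Rightarrow> complex \<Rightarrow> complex fps" where
  "FE_gf s lam x =
     (fps_const (1 - lam) * inverse (fps_exp 1 - fps_const lam)) ^ s * fps_exp x"

definition FrobEuler :: "nat \<Rightarrow> nat \<Rightarrow> complex \<Rightarrow> complex \<Rightarrow> complex" where
  "FrobEuler n s lam x = of_nat (fact n) * fps_nth (FE_gf s lam x) n"

definition S1 :: "nat \<Rightarrow> nat \<Rightarrow> int" where
  "S1 n m = coeff (\<Prod>i<n. [:- of_nat i, 1:]) m"

end

theory Submission imports Defs begin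


lemma binom_exp_ln: "fps_binomial (c::complex) = fps_exp c oo fps_ln 1"
proof -
  let ?a = "fps_exp c oo fps_ln 1"
  have "fps_deriv ?a = (fps_const c * fps_exp c oo fps_ln 1) * inverse (1 + fps_X)"
    by (simp add: fps_compose_deriv fps_ln_deriv)
  also have "\<dots> = fps_const c * ?a / (1 + fps_X)"
    by (simp add: fps_compose_mult_distrib fps_divide_unit)
  finally have "fps_deriv ?a = fps_const c * ?a / (1 + fps_X)" .
  moreover have "?a $ 0 = 1" by simp
  ultimately show ?thesis using fps_binomial_ODE_unique' by metis
qed



lemma S1_0_right: "S1 0 m = (if m = 0 then 1 else 0)"
  by (simp add: S1_def)

lemma coeff_lin_mult: "coeff ([:a, 1:] * p) (Suc m) = (a::int) * coeff p (Suc m) + coeff p m"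
  "coeff ([:a, 1:] * p) 0 = (a::int) * coeff p 0"
  by (simp_all add: mult_pCons_left)

lemma S1_Suc: "S1 (Suc j) (Suc m) = S1 j m - int j * S1 j (Suc m)"
  "S1 (Suc j) 0 = - int j * S1 j 0"
  by (simp_all add: S1_def mult.commute[of _ "[:_, 1:]"] coeff_lin_mult)

lemma S1_deg: "m > j \<Longrightarrow> S1 j m = 0"
proof (induction j arbitrary: m)
  case 0 then show ?case by (simp add: S1_0_right)
next
  case (Suc j)
  then obtain m' where "m = Suc m'" by (cases m) auto
  with Suc show ?case by (simp add: S1_Suc)
qed

lemma deriv_lemma: "((1 + fps_X) * fps_deriv (P::complex fps)) $ j = of_nat (Suc j) * P $ Suc j + of_nat j * P $ j"
  by (cases j) (simp_all add: algebra_simps)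

lemma ln_power_nth:
  "of_nat (fact m) * of_int (S1 j m) = (of_nat (fact j) * (fps_ln 1 ^ m) $ j :: complex)"
proof (induction j arbitrary: m)
  case 0
  then show ?case by (cases m) (simp_all add: S1_0_right)
next
  case (Suc j)
  show ?case
  proof (cases m)
    case 0
    have "S1 j 0 = (if j = 0 then 1 else 0)"
      using Suc.IH[of 0] by (cases j) simp_all
    then show ?thesis using 0 by (simp add: S1_Suc)
  next
    case (Suc m')
    let ?L = "fps_ln (1::complex)"
    let ?P = "?L ^ Suc m'"
    have d: "(1 + fps_X) * fps_deriv ?P = fps_const (of_nat (Suc m')) * ?L ^ m'"
    proof -
      have "fps_deriv ?P = fps_const (of_nat (Suc m')) * inverse (1 + fps_X) * ?L ^ m'"
        unfolding fps_deriv_power fps_ln_deriv by simp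
      moreover have "(1 + fps_X) * inverse (1 + fps_X :: complex fps) = 1"
        by (simp add: inverse_mult_eq_1')
      ultimately have "(1 + fps_X) * fps_deriv ?P = fps_const (of_nat (Suc m')) * ((1 + fps_X) * inverse (1 + fps_X)) * ?L ^ m'"
        by (metis (no_types, lifting) mult.assoc mult.commute)
      also have "\<dots> = fps_const (of_nat (Suc m')) * ?L ^ m'"
        using \<open>(1 + fps_X) * inverse (1 + fps_X :: complex fps) = 1\<close> by simp
      finally show ?thesis .
    qed
    have "((1 + fps_X) * fps_deriv ?P) $ j = of_nat (Suc j) * ?P $ Suc j + of_nat j * ?P $ j"
      by (rule deriv_lemma)
    moreover have "(fps_const (of_nat (Suc m')) * ?L ^ m') $ j = of_nat (Suc m') * (?L ^ m') $ j"
      by (rule fps_mult_left_const_nth)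
    ultimately have e: "of_nat (Suc j) * ?P $ Suc j + of_nat j * ?P $ j = of_nat (Suc m') * (?L ^ m') $ j"
      using d by metis
    have i1: "of_nat (fact m') * of_int (S1 j m') = (of_nat (fact j) * (?L ^ m') $ j :: complex)"
      by (rule Suc.IH)
    have i2: "of_nat (fact (Suc m')) * of_int (S1 j (Suc m')) = (of_nat (fact j) * ?P $ j :: complex)"
      by (rule Suc.IH)
    have "of_nat (fact (Suc m')) * of_int (S1 (Suc j) (Suc m')) =
        (of_nat (Suc m') * (of_nat (fact m') * of_int (S1 j m')) - of_nat j * (of_nat (fact (Suc m')) * of_int (S1 j (Suc m'))) :: complex)"
      by (simp add: S1_Suc algebra_simps)
    also have "\<dots> = of_nat (Suc m') * (of_nat (fact j) * (?L ^ m') $ j) - of_nat j * (of_nat (fact j) * ?P $ j)"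
      by (simp only: i1 i2)
    also have "\<dots> = of_nat (fact j) * (of_nat (Suc m') * (?L ^ m') $ j - of_nat j * ?P $ j)"
      by (simp only: algebra_simps)
    also have "\<dots> = of_nat (fact j) * (of_nat (Suc j) * ?P $ Suc j)"
      using e by (metis add_diff_cancel_right')
    also have "\<dots> = of_nat (fact (Suc j)) * ?P $ Suc j"
      by (simp add: algebra_simps)
    finally show ?thesis using Suc by simp
  qed
qed



lemma lin_power_nth: "((1 + fps_const (c::complex) * fps_X) ^ s) $ a = of_nat (s choose a) * c ^ a"
proof (induction s arbitrary: a)
  case 0 then show ?case by simp
next
  case (Suc s)
  let ?P = "(1 + fps_const c * fps_X) ^ s"
  have eq: "(1 + fps_const c * fps_X) ^ Suc s = ?P + fps_const c * (fps_X * ?P)"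
    by (simp add: algebra_simps)
  have "((1 + fps_const c * fps_X) ^ Suc s) $ a = ?P $ a + c * (if a = 0 then 0 else ?P $ (a - 1))"
    by (simp only: eq fps_add_nth fps_mult_left_const_nth fps_X_mult_nth)
  then show ?case using Suc.IH[of a] Suc.IH[of "a - 1"]
    by (cases a) (simp_all add: algebra_simps)
qed

lemma fact_identity: "a \<le> l \<Longrightarrow> l \<le> n \<Longrightarrow>
  (n choose l) * (l choose a) * fact a * fact (l - a) * fact (n - l) = (fact n :: nat)"
  by (metis binomial_fact_lemma mult.assoc mult.commute)

lemma gf_decomp:
  assumes "lam \<noteq> 1"
  shows "Atilde_gf r k x = Atilde_gf r k 0 * (1 + fps_const (1 / (1 - lam)) * fps_X) ^ s
            * (FE_gf s lam x oo fps_ln 1)"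
proof -
  let ?L = "fps_ln (1::complex)"
  let ?Q = "fps_const (1 - lam) * inverse (fps_exp 1 - fps_const lam)"
  let ?c = "1 / (1 - lam)"
  have L0: "?L $ 0 = 0" by simp
  have "?Q * (fps_exp 1 - fps_const lam) = fps_const (1 - lam)"
    using assms by (simp add: mult.assoc inverse_mult_eq_1)
  hence "(?Q oo ?L) * ((fps_exp 1 oo ?L) - fps_const lam) = fps_const (1 - lam)"
    by (metis L0 fps_compose_mult_distrib fps_compose_sub_distrib fps_const_compose)
  hence q1: "(?Q oo ?L) * (1 + fps_X - fps_const lam) = fps_const (1 - lam)"
    by (simp add: binom_exp_ln[symmetric] fps_binomial_1)
  have "1 + fps_const ?c * fps_X = fps_const ?c * (1 + fps_X - fps_const lam)"
    using assms by (simp add: algebra_simps fps_const_mult[symmetric] fps_const_add[symmetric] 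
        fps_const_sub[symmetric] field_simps del: fps_const_mult fps_const_add)
  hence "(1 + fps_const ?c * fps_X) * (?Q oo ?L) = fps_const ?c * ((?Q oo ?L) * (1 + fps_X - fps_const lam))"
    by (simp only: mult_ac)
  also have "\<dots> = fps_const (?c * (1 - lam))" by (simp only: q1 fps_const_mult)
  also have "\<dots> = 1" using assms by simp
  finally have q2: "(1 + fps_const ?c * fps_X) * (?Q oo ?L) = 1" .
  have "FE_gf s lam x oo ?L = (?Q ^ s oo ?L) * (fps_exp x oo ?L)"
    unfolding FE_gf_def by (rule fps_compose_mult_distrib[OF L0])
  also have "\<dots> = (?Q oo ?L) ^ s * (fps_exp x oo ?L)"
    by (simp only: fps_compose_power[OF L0])
  finally have "FE_gf s lam x oo ?L = (?Q oo ?L) ^ s * (fps_exp x oo ?L)" .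
  hence "(1 + fps_const ?c * fps_X) ^ s * (FE_gf s lam x oo ?L) = fps_binomial x"
    by (simp add: binom_exp_ln mult.assoc[symmetric] power_mult_distrib[symmetric] q2)
  moreover have "Atilde_gf r k x = Atilde_gf r k 0 * fps_binomial x"
    by (simp add: Atilde_gf_def)
  ultimately show ?thesis by (simp add: mult.assoc)
qed



theorem theorem8:
  fixes n r s :: nat and k :: int and lam x :: complex
  assumes "lam \<noteq> 1"
  shows "Atilde n r k x =
    (\<Sum>m = 0..n.
       (\<Sum>l = 0..n - m. \<Sum>a = 0..l.
          of_nat ((n choose l) * (s choose a) * (l choose a) * fact a) / (1 - lam) ^ a
          * of_int (S1 (n - l) m) * Atilde (l - a) r k 0)
       * FrobEuler m s lam x)"
proof -
  let ?L = "fps_ln (1::complex)"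
  let ?c = "1 / (1 - lam)"
  let ?G = "Atilde_gf r k 0"
  let ?B = "(1 + fps_const ?c * fps_X) ^ s"
  let ?F = "FE_gf s lam x oo ?L"
  let ?H = "\<lambda>m. FrobEuler m s lam x"
  let ?A = "\<lambda>i. Atilde i r k 0"
  let ?T = "\<lambda>l a m. of_nat ((n choose l) * (s choose a) * (l choose a) * fact a) / (1 - lam) ^ a
          * of_int (S1 (n - l) m) * ?A (l - a) * ?H m"
  have hG: "?G $ i = ?A i / fact i" for i
    by (simp add: Atilde_def)
  have hB: "?B $ a = of_nat (s choose a) * ?c ^ a" for a
    by (rule lin_power_nth)
  have hF: "?F $ j = (\<Sum>m = 0..n. ?H m * of_int (S1 j m)) / fact j" if "j \<le> n" for j
  proof -
    have "?F $ j = (\<Sum>m = 0..j. FE_gf s lam x $ m * (?L ^ m) $ j)"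
      by (rule fps_compose_nth)
    also have "\<dots> = (\<Sum>m = 0..j. ?H m * of_int (S1 j m) / fact j)"
    proof (rule sum.cong[OF refl])
      fix m
      have "(?L ^ m) $ j = of_nat (fact m) * of_int (S1 j m) / of_nat (fact j)"
        using ln_power_nth[of m j] by (simp add: field_simps)
      then show "FE_gf s lam x $ m * (?L ^ m) $ j = ?H m * of_int (S1 j m) / fact j"
        by (simp add: FrobEuler_def)
    qed
    also have "\<dots> = (\<Sum>m = 0..n. ?H m * of_int (S1 j m) / fact j)"
      by (rule sum.mono_neutral_left) (use that S1_deg in auto)
    finally show ?thesis by (simp add: sum_divide_distrib)
  qed
  have "Atilde_gf r k x = (?B * ?G) * ?F"
    using gf_decomp[OF assms, of r k x s] by (simp add: mult_ac)
  hence "Atilde n r k x = fact n * ((?B * ?G) * ?F) $ n"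
    by (simp add: Atilde_def)
  also have "\<dots> = fact n * (\<Sum>l = 0..n. (\<Sum>a = 0..l. ?B $ a * ?G $ (l - a)) * ?F $ (n - l))"
    by (simp add: fps_mult_nth)
  also have "\<dots> = (\<Sum>l = 0..n. \<Sum>a = 0..l. fact n * (?B $ a * ?G $ (l - a)) * ?F $ (n - l))"
    by (simp add: sum_distrib_left sum_distrib_right mult.assoc)
  also have "\<dots> = (\<Sum>l = 0..n. \<Sum>a = 0..l. \<Sum>m = 0..n. ?T l a m)"
  proof (intro sum.cong refl)
    fix l a assume l: "l \<in> {0..n}" and a: "a \<in> {0..l}"
    have fn: "(fact n :: complex) = of_nat ((n choose l) * (l choose a) * fact a) * fact (l - a) * fact (n - l)"
      using fact_identity[of a l n] l a by (metis atLeastAtMost_iff of_nat_fact of_nat_mult)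
    have "(\<Sum>m = 0..n. ?T l a m) = of_nat ((n choose l) * (s choose a) * (l choose a) * fact a) / (1 - lam) ^ a
          * ?A (l - a) * (\<Sum>m = 0..n. ?H m * of_int (S1 (n - l) m))"
      by (simp add: sum_distrib_left sum_divide_distrib mult_ac)
    moreover have "fact n * (?B $ a * ?G $ (l - a)) * ?F $ (n - l) = of_nat ((n choose l) * (s choose a) * (l choose a) * fact a) / (1 - lam) ^ a
          * ?A (l - a) * (\<Sum>m = 0..n. ?H m * of_int (S1 (n - l) m))"
      unfolding hB hG hF[of "n - l", OF diff_le_self] fn
      by (simp add: field_simps power_divide)
    ultimately show "fact n * (?B $ a * ?G $ (l - a)) * ?F $ (n - l) = (\<Sum>m = 0..n. ?T l a m)"
      by simp
  qed
  also have "\<dots> = (\<Sum>l = 0..n. \<Sum>m = 0..n. \<Sum>a = 0..l. ?T l a m)"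
    by (rule sum.cong[OF refl], rule sum.swap)
  also have "\<dots> = (\<Sum>m = 0..n. \<Sum>l = 0..n. \<Sum>a = 0..l. ?T l a m)"
    by (rule sum.swap)
  also have "\<dots> = (\<Sum>m = 0..n. \<Sum>l = 0..n - m. \<Sum>a = 0..l. ?T l a m)"
  proof (rule sum.cong[OF refl])
    fix m assume "m \<in> {0..n}"
    show "(\<Sum>l = 0..n. \<Sum>a = 0..l. ?T l a m) = (\<Sum>l = 0..n - m. \<Sum>a = 0..l. ?T l a m)"
      by (rule sum.mono_neutral_right) (auto simp: S1_deg)
  qed
  finally show ?thesis by (simp add: sum_distrib_right)
qed

end
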